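(* Let $T$ be a binary tree rooted at $O$. Consider the stochastic search game on $T$ in which every edge has activation probability $p$. There exists $p_0\in(0,1)$ (depending on $T$) such that for all $p\in[p_0,1]$ the following hold. - For every leaf edge $e$, the expected time for the biased depth-first strategy $\sigma_\alpha$ to traverse $e$ is $\frac12\tau(O)+\Lambda(O)$. - Consequently, $\mathrm{val}(p)\le \frac12\tau(O)+\Lambda(O)$.
   Context: Setting: the stochastic search game on a finite tree $T$ rooted at $O$. Every edge has length $1$ and is active at each stage independently with the same probability $p\in(0,1]$. The hider picks an edge and stays there. The searcher, starting at $O$ and observing which edges are currently active, at each stage either waits or traverses an active edge incident to her position. The hider's payoff is the expected first time the searcher traverses his edge. $\mathrm{val}(p)$ is the value. Orient the edges away from $O$. For a vertex $v$, $T_v$ is the subtree rooted at $v$ consisting of all edges below $v$. For an edge $e=(u,w)$, $T_e$ is $\{e\}\cup T_w$, rooted at $u$. A leaf edge is an edge whose head has no outgoing edge. $T$ is binary if every vertex has at most two outgoing edges. A depth-first strategy (DFS) acts as follows at the searcher's current vertex: - if some untraversed outgoing edge is active, traverse one of them (possibly chosen at random); - if all untraversed outgoing edges are inactive, wait; - if all outgoing edges have been traversed, traverse the edge back toward $O$ if it is active, and wait otherwise. Cycle time: for a vertex or edge $z$, $\tau(z)$ is the expected time for a DFS on $T_z$, started at its root, to traverse every edge of $T_z$ and return to the root. It does not depend on the DFS. Equivalently, for binary trees: - $\tau(v)=0$ if $v$ has no outgoing edge; - $\tau(e)=\tau(w)+2/p$ for $e=(u,w)$; - $\tau(v)=\tau(e)$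 if $v$ has exactly one outgoing edge $e$; - $\tau(v)=\tau(w_1)+\tau(w_2)+3/p+1/(1-(1-p)^2)$ if $v$ has outgoing edges to $w_1,w_2$. The function $\Lambda$ is defined recursively on rooted binary trees. Write $\Lambda(v)=\Lambda(T_v)$ and $\Lambda(e)=\Lambda(T_e)$. - $\Lambda(v)=0$ if $v$ has no outgoing edge. - If the root $r$ has a single outgoing edge $e=(r,w)$, then $\Lambda(r)=\Lambda(e)=\Lambda(w)$. - If $r$ has two outgoing edges $e_1=(r,w_1)$ and $e_2=(r,w_2)$, then $$\Lambda(r)=\frac{\tau(e_1)}{\tau(e_1)+\tau(e_2)}\Lambda(w_1)+\frac{\tau(e_2)}{\tau(e_1)+\tau(e_2)}\Lambda(w_2)+\frac12\Big(\frac1{1-(1-p)^2}-\frac1p\Big).$$ The biased depth-first strategy $\sigma_\alpha$ is the DFS that, at a vertex whose two outgoing edges $e_1,e_2$ are both untraversed and both active, takes $e_1$ with probability $\alpha(e_1)$ and $e_2$ with probability $\alpha(e_2)=1-\alpha(e_1)$, where $$\alpha(e_1)=\mathrm{proj}_{[0,1]}\Big(\frac12+\frac{\Lambda(e_1)-\Lambda(e_2)}{\tau(e_1)+\tau(e_2)}\cdot\frac{1-(1-p)^2}{p^2}\Big).$$ *)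

theory Defs
  imports "HOL-Probability.Probability"
begin

text \<open>A finite rooted binary tree. Each child link is an edge of length 1.
  Leaf: no outgoing edge; Node1 t: exactly one outgoing edge; Node2 l r: two.\<close>
datatype btree = Leaf | Node1 btree | Node2 btree btree

text \<open>Vertices are addressed by paths from the root O = []; the children of
  vertex v are v @ [b]. An edge is identified by its head vertex w (w \<noteq> []),
  i.e. the edge (butlast w, w).\<close>
fun verts :: "btree \<Rightarrow> bool list set" where
  "verts Leaf = {[]}"
| "verts (Node1 t) = {[]} \<union> Cons False ` verts t"
| "verts (Node2 l r) = {[]} \<union> Cons False ` verts l \<union> Cons True ` verts r"

definition edges :: "btree \<Rightarrow> bool list set" where
  "edges t = verts t - {[]}"

fun sub :: "btree \<Rightarrow> bool list \<Rightarrow> btree" where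
  "sub t [] = t"
| "sub (Node1 t) (False # v) = sub t v"
| "sub (Node2 l r) (False # v) = sub l v"
| "sub (Node2 l r) (True # v) = sub r v"
| "sub _ _ = Leaf"

definition leaf_edge :: "btree \<Rightarrow> bool list \<Rightarrow> bool" where
  "leaf_edge t e \<longleftrightarrow> e \<in> edges t \<and> e @ [False] \<notin> verts t \<and> e @ [True] \<notin> verts t"

text \<open>tauT p T = tau of the root of T.  tau(e) for e=(u,w) is tauT p (T_w) + 2/p.\<close>
primrec tauT :: "real \<Rightarrow> btree \<Rightarrow> real" where
  "tauT p Leaf = 0"
| "tauT p (Node1 t) = (tauT p t + 2/p)"
| "tauT p (Node2 l r) = tauT p l + tauT p r + 3/p + 1/(1-(1-p)^2)"

primrec LamT :: "real \<Rightarrow> btree \<Rightarrow> real" where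
  "LamT p Leaf = 0"
| "LamT p (Node1 t) = LamT p t"
| "LamT p (Node2 l r) =
     (let te1 = tauT p l + 2/p; te2 = tauT p r + 2/p in
       te1/(te1+te2) * LamT p l + te2/(te1+te2) * LamT p r
       + 1/2 * (1/(1-(1-p)^2) - 1/p))"

definition alpha_at :: "btree \<Rightarrow> real \<Rightarrow> bool list \<Rightarrow> real" where
  "alpha_at t p v = (case sub t v of
      Node2 l r \<Rightarrow>
        (let te1 = tauT p l + 2/p; te2 = tauT p r + 2/p in
          max 0 (min 1 (1/2 + (LamT p l - LamT p r)/(te1+te2) * ((1-(1-p)^2)/p^2))))
    | _ \<Rightarrow> 1)"

definition config :: "btree \<Rightarrow> real \<Rightarrow> bool list set pmf" where
  "config t p = map_pmf (\<lambda>f. {e. f e}) (Pi_pmf (edges t) False (\<lambda>_. bernoulli_pmf p))"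

text \<open>A history: for each elapsed stage, the observed active set and the searcher's
  resulting position.\<close>
type_synonym hist = "(bool list set \<times> bool list) list"

text \<open>A (behavioural, possibly randomised) searcher strategy: given the history and
  the currently active edges, a distribution over the proposed next position
  (proposing the current position = waiting).\<close>
type_synonym strategy = "hist \<Rightarrow> bool list set \<Rightarrow> bool list pmf"

definition pos :: "hist \<Rightarrow> bool list" where
  "pos h = (if h = [] then [] else snd (last h))"

definition move :: "btree \<Rightarrow> bool list set \<Rightarrow> bool list \<Rightarrow> bool list \<Rightarrow> bool list" where
  "move t A v x =
     (if (x \<in> verts t \<and> (\<exists>b. x = v @ [b]) \<and> x \<in> A) \<or> (v \<noteq> [] \<and> x = butlast v \<and> v \<in> A)
      then x else v)"

fun hist_pmf :: "btree \<Rightarrow> real \<Rightarrow> strategy \<Rightarrow> nat \<Rightarrow> hist pmf" where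
  "hist_pmf t p \<sigma> 0 = return_pmf []"
| "hist_pmf t p \<sigma> (Suc n) =
     bind_pmf (hist_pmf t p \<sigma> n) (\<lambda>h.
     bind_pmf (config t p) (\<lambda>A.
     map_pmf (\<lambda>x. h @ [(A, move t A (pos h) x)]) (\<sigma> h A)))"

definition positions :: "hist \<Rightarrow> bool list list" where
  "positions h = [] # map snd h"

definition traversed :: "hist \<Rightarrow> bool list set" where
  "traversed h = {e. e \<noteq> [] \<and> (\<exists>i < length h.
      (positions h ! i, positions h ! Suc i) \<in> {(butlast e, e), (e, butlast e)})}"

text \<open>Expected first time at which the searcher traverses edge e:
  E[T] = sum over n of P(T > n).\<close>
definition ET :: "btree \<Rightarrow> real \<Rightarrow> strategy \<Rightarrow> bool list \<Rightarrow> ennreal" where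
  "ET t p \<sigma> e = (\<Sum>n. ennreal (measure_pmf.prob (hist_pmf t p \<sigma> n) {h. e \<notin> traversed h}))"

definition val :: "btree \<Rightarrow> real \<Rightarrow> ennreal" where
  "val t p = (INF \<sigma> :: strategy. SUP e \<in> edges t. ET t p \<sigma> e)"

definition sigma_alpha :: "btree \<Rightarrow> real \<Rightarrow> strategy" where
  "sigma_alpha t p h A =
     (let v = pos h;
          C = {c \<in> verts t. (\<exists>b. c = v @ [b]) \<and> c \<notin> traversed h}
      in if v @ [False] \<in> C \<inter> A \<and> v @ [True] \<in> C \<inter> A then
           map_pmf (\<lambda>b. if b then v @ [False] else v @ [True]) (bernoulli_pmf (alpha_at t p v))
         else if C \<inter> A \<noteq> {} then return_pmf (THE c. c \<in> C \<inter> A)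
         else if C \<noteq> {} then return_pmf v
         else if v \<noteq> [] \<and> v \<in> A then return_pmf (butlast v)
         else return_pmf v)"

end

theory Submission
  imports Defs "HOL-Library.Sublist"
begin

lemma nil_verts[simp]: "[] \<in> verts t"
  by (cases t) auto

lemma finite_verts[simp]: "finite (verts t)"
  by (induction t) auto

lemma finite_edges[simp]: "finite (edges t)"
  by (simp add: edges_def)

lemma verts_append: "v \<in> verts t \<Longrightarrow> (v @ w \<in> verts t \<longleftrightarrow> w \<in> verts (sub t v))"
proof (induction t arbitrary: v)
  case Leaf then show ?case by auto
next
  case (Node1 t) then show ?case by (cases v) auto
next
  case (Node2 l r) then show ?case by (cases v) auto
qed

lemma verts_prefix: "v @ w \<in> verts t \<Longrightarrow> v \<in> verts t"
proof (induction t arbitrary: v)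
  case Leaf then show ?case by auto
next
  case (Node1 t) then show ?case by (cases v) auto
next
  case (Node2 l r) then show ?case by (cases v) auto
qed

lemma sub_append: "v \<in> verts t \<Longrightarrow> sub t (v @ w) = sub (sub t v) w"
proof (induction t arbitrary: v)
  case Leaf then show ?case by auto
next
  case (Node1 t) then show ?case by (cases v) auto
next
  case (Node2 l r) then show ?case by (cases v) auto
qed

lemma child_verts: "[b] \<in> verts s \<longleftrightarrow> (case s of Leaf \<Rightarrow> False | Node1 _ \<Rightarrow> \<not> b | Node2 _ _ \<Rightarrow> True)"
  by (cases s) auto

lemma sub_child0: "sub s [False] = (case s of Leaf \<Rightarrow> Leaf | Node1 x \<Rightarrow> x | Node2 l r \<Rightarrow> l)"
  by (cases s) auto
lemma sub_child1: "sub s [True] = (case s of Node2 l r \<Rightarrow> r | _ \<Rightarrow> Leaf)"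
  by (cases s) auto

lemma sub_Leaf[simp]: "sub Leaf w = Leaf"
  by (cases w) auto

lemma size_sub: "size (sub t v) \<le> size t"
proof (induction t v rule: sub.induct)
qed auto

lemma q_pos: fixes p :: real assumes "0 < p" "p \<le> 1" shows "0 < 1-(1-p)^2"
proof -
  have "1-(1-p)^2 = p*(2-p)" by (simp add: power2_eq_square algebra_simps)
  then show ?thesis using assms by simp
qed

lemma conv_comb: fixes a b X :: real assumes "0 < a" "0 < b" shows "a/(a+b) * X + b/(a+b) * X = X"
proof -
  have e: "a/(a+b) * X + b/(a+b) * X = ((a+b)/(a+b)) * X" by (simp only: add_divide_distrib distrib_right)
  have "a + b \<noteq> 0" using assms by simp
  then show ?thesis unfolding e by simp
qed

lemma tauT_nonneg: assumes "0 < p" "p \<le> 1" shows "0 \<le> tauT p s"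
  using q_pos[OF assms] assms by (induction s) auto

lemma LamT_bound:
  assumes "0 < p" "p \<le> 1"
  shows "\<bar>LamT p s\<bar> \<le> real (size s) * ((1-p)/(2*(1-(1-p)^2)))"
proof (induction s)
  case Leaf then show ?case by simp
next
  case (Node1 s)
  have c: "0 \<le> (1-p)/(2*(1-(1-p)^2))" using assms q_pos[OF assms] by simp
  have "real (size s) * ((1-p)/(2*(1-(1-p)^2))) \<le> real (size (Node1 s)) * ((1-p)/(2*(1-(1-p)^2)))"
    by (rule mult_right_mono[OF _ c]) simp
  then show ?case using Node1 by simp
next
  case (Node2 l r)
  define q where "q = 1-(1-p)^2"
  have q: "0 < q" using q_pos[OF assms] unfolding q_def .
  define c where "c = (1-p)/(2*q)"
  have c: "0 \<le> c" using q assms by (simp add: c_def)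
  have qq: "q = p*(2-p)" unfolding q_def by (simp add: power2_eq_square algebra_simps)
  have cc: "1/2 * (1/q - 1/p) = - c"
    using q assms unfolding c_def qq by (simp add: field_simps)
  define a where "a = tauT p l + 2/p"
  define b where "b = tauT p r + 2/p"
  have a: "0 < a" using tauT_nonneg[OF assms] assms by (simp add: a_def add_nonneg_pos)
  have b: "0 < b" using tauT_nonneg[OF assms] assms by (simp add: b_def add_nonneg_pos)
  have IHl: "\<bar>LamT p l\<bar> \<le> real (size l) * c" using Node2 by (simp add: c_def q_def)
  have IHr: "\<bar>LamT p r\<bar> \<le> real (size r) * c" using Node2 by (simp add: c_def q_def)
  have l2: "\<bar>LamT p l\<bar> \<le> real (size l + size r) * c"
    using IHl c by (meson le_add1 mult_right_mono of_nat_le_iff order_trans)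
  have r2: "\<bar>LamT p r\<bar> \<le> real (size l + size r) * c"
    using IHr c by (meson le_add2 mult_right_mono of_nat_le_iff order_trans)
  have "\<bar>a/(a+b) * LamT p l + b/(a+b) * LamT p r\<bar> \<le> \<bar>a/(a+b) * LamT p l\<bar> + \<bar>b/(a+b) * LamT p r\<bar>"
    by (rule abs_triangle_ineq)
  also have "\<dots> = a/(a+b) * \<bar>LamT p l\<bar> + b/(a+b) * \<bar>LamT p r\<bar>"
    using a b by (simp add: abs_mult)
  also have "\<dots> \<le> a/(a+b) * (real (size l + size r) * c) + b/(a+b) * (real (size l + size r) * c)"
    apply (intro add_mono mult_left_mono)
    using a b l2 r2 by auto
  also have "\<dots> = real (size l + size r) * c" by (rule conv_comb[OF a b])
  finally have *: "\<bar>a/(a+b) * LamT p l + b/(a+b) * LamT p r\<bar> \<le> real (size l + size r) * c" .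
  have L: "LamT p (Node2 l r) = a/(a+b) * LamT p l + b/(a+b) * LamT p r + 1/2 * (1/q - 1/p)"
    by (simp add: Let_def a_def b_def q_def)
  have "\<bar>LamT p (Node2 l r)\<bar> \<le> real (size l + size r) * c + c"
    unfolding L cc using * c by linarith
  moreover have "real (size (Node2 l r)) * c = real (size l + size r) * c + c" by (simp add: algebra_simps)
  ultimately show ?case unfolding c_def q_def by linarith
qed

definition p0_of :: "btree \<Rightarrow> real" where
  "p0_of t = 1 - 1/(4*(real (size t) + 1))"

lemma p0_of_props: "3/4 \<le> p0_of t" "p0_of t < 1"
proof -
  have "1/(4*(real (size t) + 1)) \<le> 1/4" by (simp add: field_simps)
  then show "3/4 \<le> p0_of t" unfolding p0_of_def by linarith
  show "p0_of t < 1" unfolding p0_of_def by simp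
qed

lemma alpha_unclipped:
  assumes p: "p0_of t \<le> p" "p \<le> 1" and sv: "sub t v = Node2 l r"
  shows "alpha_at t p v = 1/2 + (LamT p l - LamT p r)/((tauT p l + 2/p) + (tauT p r + 2/p)) * ((1-(1-p)^2)/p^2)"
proof -
  have p34: "3/4 \<le> p" using p p0_of_props[of t] by linarith
  have p0: "0 < p" using p34 by simp
  define n where "n = real (size t)"
  define q where "q = 1-(1-p)^2"
  have q: "0 < q" unfolding q_def using q_pos[OF p0 p(2)] .
  define c where "c = (1-p)/(2*q)"
  have c: "0 \<le> c" using q p by (simp add: c_def)
  have szlr: "size l + size r \<le> size t" using size_sub[of t v] sv by simp
  have bl: "\<bar>LamT p l\<bar> \<le> real (size l) * c" using LamT_bound[OF p0 p(2)] by (simp add: c_def q_def)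
  have br: "\<bar>LamT p r\<bar> \<le> real (size r) * c" using LamT_bound[OF p0 p(2)] by (simp add: c_def q_def)
  have "real (size l) * c + real (size r) * c \<le> n * c"
    using szlr c unfolding n_def by (simp add: distrib_right[symmetric] mult_right_mono)
  then have d: "\<bar>LamT p l - LamT p r\<bar> \<le> n * c" using bl br by linarith
  define S where "S = (tauT p l + 2/p) + (tauT p r + 2/p)"
  have "4/p \<le> S" unfolding S_def using tauT_nonneg[OF p0 p(2), of l] tauT_nonneg[OF p0 p(2), of r] by simp
  moreover have "4 \<le> 4/p" using p0 p(2) by (simp add: field_simps)
  ultimately have S4: "4 \<le> S" by linarith
  define X where "X = (LamT p l - LamT p r)/S * (q/p^2)"
  have "\<bar>X\<bar> = \<bar>LamT p l - LamT p r\<bar> * (q/p^2) / S"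
    unfolding X_def using S4 q p0 by (simp add: abs_mult abs_divide)
  also have "\<dots> \<le> n * c * (q/p^2) / 4"
  proof (rule frac_le)
    show "0 \<le> n * c * (q / p\<^sup>2)" using c q p0 by (simp add: n_def)
    show "\<bar>LamT p l - LamT p r\<bar> * (q / p\<^sup>2) \<le> n * c * (q / p\<^sup>2)"
      by (rule mult_right_mono[OF d]) (use q p0 in simp)
  qed (use S4 in auto)
  also have "n * c * (q/p^2) / 4 = n * (1-p) / (8 * p^2)"
    unfolding c_def using q p0 by (simp add: field_simps)
  also have "\<dots> \<le> n * (1-p) / (8 * (3/4)^2)"
    apply (rule divide_left_mono)
    using p34 p(2) by (auto simp: n_def intro!: power_mono)
  also have "\<dots> \<le> 1/2"
  proof -
    have "1 - p \<le> 1/(4*(n+1))" using p(1) unfolding p0_of_def n_def by linarith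
    then have "n * (1-p) \<le> n * (1/(4*(n+1)))" by (rule mult_left_mono) (simp add: n_def)
    also have "\<dots> \<le> 1/2" by (simp add: n_def field_simps)
    finally have "n * (1-p) \<le> 1/2" .
    then show ?thesis by (simp add: power2_eq_square)
  qed
  finally have "\<bar>X\<bar> \<le> 1/2" .
  then have "max 0 (min 1 (1/2 + X)) = 1/2 + X" by simp
  then show ?thesis using sv unfolding alpha_at_def X_def S_def q_def by (simp add: Let_def)
qed

lemma integral_bind_pmf_bdd:
  fixes f :: "'b \<Rightarrow> real"
  assumes "\<And>x. \<bar>f x\<bar> \<le> B"
  shows "measure_pmf.expectation (bind_pmf M N) f = measure_pmf.expectation M (\<lambda>x. measure_pmf.expectation (N x) f)"
  using measurable_measure_pmf[of N] assms unfolding measure_pmf_bind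
  by (subst integral_bind[where K="count_space UNIV" and B=B and B'=1]) (auto intro: prob_space.finite_measure simp: measure_pmf.emeasure_space_1 prob_space_measure_pmf)

definition newE :: "bool list \<Rightarrow> bool list \<Rightarrow> bool list set" where
  "newE v y = {ed. ed \<noteq> [] \<and> (v, y) \<in> {(butlast ed, ed), (ed, butlast ed)}}"

lemma positions_snoc: "positions (h @ [x]) = positions h @ [snd x]"
  by (simp add: positions_def)

lemma length_positions[simp]: "length (positions h) = Suc (length h)"
  by (simp add: positions_def)

lemma positions_last: "positions h ! length h = pos h"
  by (cases h rule: rev_cases) (auto simp: positions_def pos_def nth_append)

lemma pos_snoc[simp]: "pos (h @ [x]) = snd x"
  by (simp add: pos_def)

lemma traversed_snoc: "traversed (h @ [(A, y)]) = traversed h \<union> newE (pos h) y"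
proof -
  have P: "positions (h @ [(A,y)]) ! i = positions h ! i" if "i \<le> length h" for i
    using that by (simp add: positions_snoc nth_append)
  have Q: "positions (h @ [(A,y)]) ! Suc (length h) = y"
    by (simp add: positions_snoc nth_append)
  show ?thesis
    unfolding traversed_def newE_def
  proof (intro set_eqI iffI)
    fix ed assume "ed \<in> {e. e \<noteq> [] \<and> (\<exists>i<length (h @ [(A, y)]). (positions (h @ [(A, y)]) ! i, positions (h @ [(A, y)]) ! Suc i) \<in> {(butlast e, e), (e, butlast e)})}"
    then obtain i where "ed \<noteq> []" "i < Suc (length h)" "(positions (h @ [(A, y)]) ! i, positions (h @ [(A, y)]) ! Suc i) \<in> {(butlast ed, ed), (ed, butlast ed)}" by auto
    then show "ed \<in> {e. e \<noteq> [] \<and> (\<exists>i<length h. (positions h ! i, positions h ! Suc i) \<in> {(butlast e, e), (e, butlast e)})} \<union> {ed. ed \<noteq> [] \<and> (pos h, y) \<in> {(butlast ed, ed), (ed, butlast ed)}}"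
      using P Q positions_last[of h] by (cases "i < length h") (auto simp: less_Suc_eq)
  next
    fix ed assume "ed \<in> {e. e \<noteq> [] \<and> (\<exists>i<length h. (positions h ! i, positions h ! Suc i) \<in> {(butlast e, e), (e, butlast e)})} \<union> {ed. ed \<noteq> [] \<and> (pos h, y) \<in> {(butlast ed, ed), (ed, butlast ed)}}"
    then show "ed \<in> {e. e \<noteq> [] \<and> (\<exists>i<length (h @ [(A, y)]). (positions (h @ [(A, y)]) ! i, positions (h @ [(A, y)]) ! Suc i) \<in> {(butlast e, e), (e, butlast e)})}"
    proof
      assume "ed \<in> {e. e \<noteq> [] \<and> (\<exists>i<length h. (positions h ! i, positions h ! Suc i) \<in> {(butlast e, e), (e, butlast e)})}"
      then obtain i where "ed \<noteq> []" "i < length h" "(positions h ! i, positions h ! Suc i) \<in> {(butlast ed, ed), (ed, butlast ed)}" by auto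
      then show ?thesis using P[of i] P[of "Suc i"] by (intro CollectI conjI exI[of _ i]) auto
    next
      assume "ed \<in> {ed. ed \<noteq> [] \<and> (pos h, y) \<in> {(butlast ed, ed), (ed, butlast ed)}}"
      then show ?thesis using P[of "length h"] Q positions_last[of h]
        by (intro CollectI conjI exI[of _ "length h"]) auto
    qed
  qed
qed

lemma traversed_nil[simp]: "traversed [] = {}"
  by (simp add: traversed_def)

lemma pos_nil[simp]: "pos [] = []"
  by (simp add: pos_def)

lemma butlast_neq[simp]: "v \<noteq> [] \<Longrightarrow> butlast v \<noteq> v"
proof
  assume "v \<noteq> []" "butlast v = v"
  then have "length (butlast v) = length v" by simp
  then have "length v - 1 = length v" by (simp only: length_butlast)
  moreover have "length v > 0" using \<open>v \<noteq> []\<close> by simp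
  ultimately show False by linarith
qed

lemma butlast_neq'[simp]: "v \<noteq> [] \<Longrightarrow> v \<noteq> butlast v"
  using butlast_neq by metis

lemma butlast_butlast_neq[simp]: "x \<noteq> [] \<Longrightarrow> butlast (butlast x) \<noteq> x"
proof
  assume "x \<noteq> []" "butlast (butlast x) = x"
  then have "length (butlast (butlast x)) = length x" by simp
  then have "length x - 1 - 1 = length x" by (simp only: length_butlast)
  moreover have "length x > 0" using \<open>x \<noteq> []\<close> by simp
  ultimately show False by linarith
qed

lemma newE_down[simp]: "newE v (v @ [b]) = {v @ [b]}"
  unfolding newE_def by (auto dest: arg_cong[of _ _ length])

lemma newE_wait[simp]: "newE v v = {}"
  unfolding newE_def by (auto dest: arg_cong[of _ _ length])

lemma newE_up: "v \<noteq> [] \<Longrightarrow> newE v (butlast v) = {v}"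
  unfolding newE_def by (auto dest: arg_cong[of _ _ length])

lemma move_down: "c = v @ [b] \<Longrightarrow> c \<in> verts t \<Longrightarrow> c \<in> A \<Longrightarrow> move t A v c = c"
  unfolding move_def by auto

lemma move_wait[simp]: "move t A v v = v"
  unfolding move_def by (auto dest: arg_cong[of _ _ length])

lemma move_up: "v \<noteq> [] \<Longrightarrow> v \<in> A \<Longrightarrow> move t A v (butlast v) = butlast v"
  unfolding move_def by auto

definition sig :: "btree \<Rightarrow> real \<Rightarrow> bool list \<Rightarrow> bool list set \<Rightarrow> bool list set \<Rightarrow> bool list pmf" where
  "sig t p v S A = (let c0 = v@[False]; c1 = v@[True];
       u0 = (c0 \<in> verts t \<and> c0 \<notin> S); u1 = (c1 \<in> verts t \<and> c1 \<notin> S) in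
     if u0 \<and> u1 \<and> c0 \<in> A \<and> c1 \<in> A then map_pmf (\<lambda>b. if b then c0 else c1) (bernoulli_pmf (alpha_at t p v))
     else if u0 \<and> c0 \<in> A then return_pmf c0
     else if u1 \<and> c1 \<in> A then return_pmf c1
     else if u0 \<or> u1 then return_pmf v
     else if v \<noteq> [] \<and> v \<in> A then return_pmf (butlast v) else return_pmf v)"

lemma sigma_sig: "sigma_alpha t p h A = sig t p (pos h) (traversed h) A"
proof -
  define v where "v = pos h"
  define S where "S = traversed h"
  define C where "C = {c \<in> verts t. (\<exists>b. c = v @ [b]) \<and> c \<notin> S}"
  define u0 where "u0 = (v@[False] \<in> verts t \<and> v@[False] \<notin> S)"
  define u1 where "u1 = (v@[True] \<in> verts t \<and> v@[True] \<notin> S)"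
  have C: "C = {x. (x = v@[False] \<and> u0) \<or> (x = v@[True] \<and> u1)}"
  proof -
    have ex: "\<And>c. (\<exists>b. c = v@[b]) \<longleftrightarrow> (c = v@[False] \<or> c = v@[True])" by (metis (full_types))
    show ?thesis unfolding C_def u0_def u1_def ex by auto
  qed
  have ne: "v@[False] \<noteq> v@[True]" by simp
  have "sigma_alpha t p h A = (if v @ [False] \<in> C \<inter> A \<and> v @ [True] \<in> C \<inter> A then
           map_pmf (\<lambda>b. if b then v @ [False] else v @ [True]) (bernoulli_pmf (alpha_at t p v))
         else if C \<inter> A \<noteq> {} then return_pmf (THE c. c \<in> C \<inter> A)
         else if C \<noteq> {} then return_pmf v
         else if v \<noteq> [] \<and> v \<in> A then return_pmf (butlast v)
         else return_pmf v)"
    unfolding sigma_alpha_def Let_def v_def S_def C_def ..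
  also have "\<dots> = sig t p v S A"
  proof -
    have CA: "C \<inter> A = {x. (x = v@[False] \<and> u0 \<and> v@[False] \<in> A) \<or> (x = v@[True] \<and> u1 \<and> v@[True] \<in> A)}"
      unfolding C by auto
    show ?thesis unfolding sig_def Let_def u0_def[symmetric] u1_def[symmetric] CA unfolding C
      using ne by (cases u0; cases u1; cases "v@[False] \<in> A"; cases "v@[True] \<in> A") (simp_all add: ex_disj_distrib)
  qed
  finally show ?thesis unfolding v_def S_def .
qed

lemma config_single:
  assumes "x \<in> edges t"
  shows "map_pmf (\<lambda>A. x \<in> A) (config t p) = bernoulli_pmf p"
  unfolding config_def pmf.map_comp o_def
  using Pi_pmf_component[where A="edges t" and x=x and dflt=False and p="\<lambda>_. bernoulli_pmf p"] assms by simp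

lemma config_pair:
  assumes "x \<in> edges t" "y \<in> edges t" "x \<noteq> y"
  shows "map_pmf (\<lambda>A. (x \<in> A, y \<in> A)) (config t p) = pair_pmf (bernoulli_pmf p) (bernoulli_pmf p)"
proof -
  have E: "edges t = insert x (edges t - {x})" using assms by auto
  have "map_pmf (\<lambda>A. (x \<in> A, y \<in> A)) (config t p) = map_pmf (\<lambda>f. (f x, f y)) (Pi_pmf (edges t) False (\<lambda>_. bernoulli_pmf p))"
    unfolding config_def pmf.map_comp o_def by simp
  also have "\<dots> = map_pmf (\<lambda>f. (f x, f y)) (map_pmf (\<lambda>(a,f). f(x:=a)) (pair_pmf (bernoulli_pmf p) (Pi_pmf (edges t - {x}) False (\<lambda>_. bernoulli_pmf p))))"
    by (subst E, subst Pi_pmf_insert) auto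
  also have "\<dots> = map_pmf (\<lambda>(a,f). (id a, (\<lambda>f. f y) f)) (pair_pmf (bernoulli_pmf p) (Pi_pmf (edges t - {x}) False (\<lambda>_. bernoulli_pmf p)))"
    unfolding pmf.map_comp o_def using assms(3) by (intro pmf.map_cong) auto
  also have "\<dots> = pair_pmf (map_pmf id (bernoulli_pmf p)) (map_pmf (\<lambda>f. f y) (Pi_pmf (edges t - {x}) False (\<lambda>_. bernoulli_pmf p)))"
    by (rule map_pair)
  also have "map_pmf id (bernoulli_pmf p) = bernoulli_pmf p" by simp
  also have "map_pmf (\<lambda>f. f y) (Pi_pmf (edges t - {x}) False (\<lambda>_. bernoulli_pmf p)) = bernoulli_pmf p"
    using assms by (subst Pi_pmf_component) auto
  finally show ?thesis .
qed

lemma exp_bern: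
  fixes f :: "bool \<Rightarrow> real"
  assumes "0 \<le> p" "p \<le> 1"
  shows "measure_pmf.expectation (bernoulli_pmf p) f = p * f True + (1-p) * f False"
  using assms by simp

lemma exp_pair_bern:
  fixes f :: "bool \<times> bool \<Rightarrow> real"
  assumes "0 \<le> p" "p \<le> 1"
  shows "measure_pmf.expectation (pair_pmf (bernoulli_pmf p) (bernoulli_pmf p)) f =
     p*p*f (True,True) + p*(1-p)*f (True,False) + (1-p)*p*f (False,True) + (1-p)*(1-p)*f (False,False)"
proof -
  have U: "(UNIV :: (bool \<times> bool) set) = {(True,True),(True,False),(False,True),(False,False)}"
    by (simp add: UNIV_Times_UNIV[symmetric] UNIV_bool del: UNIV_Times_UNIV) blast
  have "measure_pmf.expectation (pair_pmf (bernoulli_pmf p) (bernoulli_pmf p)) f =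
     (\<Sum>a\<in>UNIV. pmf (pair_pmf (bernoulli_pmf p) (bernoulli_pmf p)) a *\<^sub>R f a)"
    by (rule integral_measure_pmf) simp_all
  also have "\<dots> = p*p*f (True,True) + p*(1-p)*f (True,False) + (1-p)*p*f (False,True) + (1-p)*(1-p)*f (False,False)" by (simp add: U pmf_pair assms)
  finally show ?thesis .
qed

lemma exp_config_single:
  fixes g :: "bool \<Rightarrow> real"
  assumes "x \<in> edges t" "0 \<le> p" "p \<le> 1"
  shows "measure_pmf.expectation (config t p) (\<lambda>A. g (x \<in> A)) = p * g True + (1-p) * g False"
proof -
  have "measure_pmf.expectation (config t p) (\<lambda>A. g (x \<in> A)) = measure_pmf.expectation (map_pmf (\<lambda>A. x \<in> A) (config t p)) g"
    by simp
  also have "\<dots> = p * g True + (1-p) * g False" unfolding config_single[OF assms(1)] using assms by simp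
  finally show ?thesis .
qed

lemma exp_config_pair:
  fixes g :: "bool \<Rightarrow> bool \<Rightarrow> real"
  assumes "x \<in> edges t" "y \<in> edges t" "x \<noteq> y" "0 \<le> p" "p \<le> 1"
  shows "measure_pmf.expectation (config t p) (\<lambda>A. g (x \<in> A) (y \<in> A)) =
     p*p*g True True + p*(1-p)*g True False + (1-p)*p*g False True + (1-p)*(1-p)*g False False"
proof -
  have "measure_pmf.expectation (config t p) (\<lambda>A. g (x \<in> A) (y \<in> A)) = measure_pmf.expectation (map_pmf (\<lambda>A. (x \<in> A, y \<in> A)) (config t p)) (case_prod g)"
    by simp
  also have "\<dots> = p*p*g True True + p*(1-p)*g True False + (1-p)*p*g False True + (1-p)*(1-p)*g False False" unfolding config_pair[OF assms(1-3)] using exp_pair_bern[OF assms(4,5)] by simp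
  finally show ?thesis .
qed

definition Inv :: "btree \<Rightarrow> bool list \<Rightarrow> bool list set \<Rightarrow> bool" where
  "Inv t v S \<longleftrightarrow> v \<in> verts t \<and> S \<subseteq> edges t \<and> (\<forall>y. y \<noteq> [] \<and> prefix y v \<longrightarrow> y \<in> S)
     \<and> (\<forall>x\<in>S. \<forall>y. y \<noteq> [] \<and> prefix y x \<longrightarrow> y \<in> S)
     \<and> (\<forall>x\<in>S. \<not> prefix x v \<longrightarrow> (\<forall>y\<in>edges t. prefix x y \<longrightarrow> y \<in> S))"

lemma InvD:
  assumes "Inv t v S"
  shows "v \<in> verts t" "S \<subseteq> edges t" "\<And>y. y \<noteq> [] \<Longrightarrow> prefix y v \<Longrightarrow> y \<in> S"
    "\<And>x y. x \<in> S \<Longrightarrow> y \<noteq> [] \<Longrightarrow> prefix y x \<Longrightarrow> y \<in> S"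
    "\<And>x y. x \<in> S \<Longrightarrow> \<not> prefix x v \<Longrightarrow> y \<in> edges t \<Longrightarrow> prefix x y \<Longrightarrow> y \<in> S"
  using assms unfolding Inv_def by blast+

lemma InvI:
  assumes "v \<in> verts t" "S \<subseteq> edges t" "\<And>y. y \<noteq> [] \<Longrightarrow> prefix y v \<Longrightarrow> y \<in> S"
    "\<And>x y. x \<in> S \<Longrightarrow> y \<noteq> [] \<Longrightarrow> prefix y x \<Longrightarrow> y \<in> S"
    "\<And>x y. x \<in> S \<Longrightarrow> \<not> prefix x v \<Longrightarrow> y \<in> edges t \<Longrightarrow> prefix x y \<Longrightarrow> y \<in> S"
  shows "Inv t v S"
  using assms unfolding Inv_def by blast

lemma Inv_init: "Inv t [] {}"
  by (rule InvI) auto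

lemma Inv_down:
  assumes I: "Inv t v S" and c: "c = v @ [b]" "c \<in> verts t" "c \<notin> S"
  shows "Inv t c (insert c S)"
proof -
  note D = InvD[OF I]
  have pc: "y = c \<or> prefix y v" if "prefix y c" for y
    using that c(1) by (simp add: prefix_snoc)
  have cne: "c \<noteq> []" using c(1) by simp
  show ?thesis
  proof (rule InvI)
    show "c \<in> verts t" by fact
    show "insert c S \<subseteq> edges t" using D(2) c(2) cne unfolding edges_def by blast
  next
    fix y assume "y \<noteq> []" "prefix y c"
    then show "y \<in> insert c S" using pc D(3) by blast
  next
    fix x y assume x: "x \<in> insert c S" and y: "y \<noteq> []" "prefix y x"
    show "y \<in> insert c S"
    proof (cases "x = c")
      case True then show ?thesis using y pc D(3) by blast
    next
      case False then have "x \<in> S" using x by blast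
      then show ?thesis using y D(4) by blast
    qed
  next
    fix x y assume x: "x \<in> insert c S" "\<not> prefix x c" and y: "y \<in> edges t" "prefix x y"
    have "x \<noteq> c" using x(2) by blast
    then have "x \<in> S" using x(1) by blast
    moreover have "\<not> prefix x v" using x(2) c(1) by (metis prefix_snoc)
    ultimately show "y \<in> insert c S" using y D(5) by blast
  qed
qed

lemma Inv_up:
  assumes I: "Inv t v S" and v: "v \<noteq> []" and ch: "\<And>b. v @ [b] \<in> verts t \<Longrightarrow> v @ [b] \<in> S"
  shows "Inv t (butlast v) S"
proof -
  note D = InvD[OF I]
  define u where "u = butlast v"
  have vu: "v = u @ [last v]" using v unfolding u_def by simp
  have vS: "v \<in> S" using D(3)[OF v] by simp
  show ?thesis unfolding u_def[symmetric]
  proof (rule InvI)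
    show "u \<in> verts t" using D(1) vu verts_prefix[of u "[last v]" t] by metis
    show "S \<subseteq> edges t" by (rule D(2))
  next
    fix y assume "y \<noteq> []" "prefix y u"
    then show "y \<in> S" using D(3) vu by (metis prefix_snoc)
  next
    fix x y assume "x \<in> S" "y \<noteq> []" "prefix y x"
    then show "y \<in> S" using D(4) by blast
  next
    fix x y assume x: "x \<in> S" "\<not> prefix x u" and y: "y \<in> edges t" "prefix x y"
    show "y \<in> S"
    proof (cases "prefix x v")
      case False then show ?thesis using x y D(5) by blast
    next
      case True
      then have xv: "x = v" using x(2) vu by (metis prefix_snoc)
      show ?thesis
      proof (cases "y = v")
        case True then show ?thesis using vS by simp
      next
        case False
        then obtain b w where yw: "y = v @ b # w" using y(2) xv by (metis prefix_def append_Nil2 list.exhaust)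
        have "y \<in> verts t" using y(1) unfolding edges_def by blast
        then have "v @ [b] \<in> verts t" using yw verts_prefix[of "v @ [b]" w t] by simp
        then have "v @ [b] \<in> S" by (rule ch)
        moreover have "\<not> prefix (v @ [b]) v" by (simp add: prefix_def)
        moreover have "prefix (v @ [b]) y" using yw by (simp add: prefix_def)
        ultimately show ?thesis using y(1) D(5) by blast
      qed
    qed
  qed
qed

lemma Inv_fresh:
  assumes "Inv t v S" "x \<notin> S" "x \<noteq> []" "prefix x y"
  shows "y \<notin> S"
  using InvD(4)[OF assms(1)] assms(2-4) by blast

lemma Inv_vS: "Inv t v S \<Longrightarrow> v \<noteq> [] \<Longrightarrow> v \<in> S"
  using InvD(3) by blast

lemma Inv_verts: "Inv t v S \<Longrightarrow> v \<in> verts t"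
  using InvD(1) by blast

lemma child_verts': "v \<in> verts t \<Longrightarrow> (v @ [b] \<in> verts t \<longleftrightarrow> (case sub t v of Leaf \<Rightarrow> False | Node1 _ \<Rightarrow> \<not> b | Node2 _ _ \<Rightarrow> True))"
  using verts_append[of v t "[b]"] child_verts[of b "sub t v"] by simp

lemma sub_child': "v \<in> verts t \<Longrightarrow> sub t (v @ [b]) = sub (sub t v) [b]"
  using sub_append by blast

lemma leaf_sub:
  assumes "leaf_edge t e" shows "sub t e = Leaf"
proof -
  have ev: "e \<in> verts t" using assms unfolding leaf_edge_def edges_def by auto
  have "e @ [False] \<notin> verts t" "e @ [True] \<notin> verts t" using assms unfolding leaf_edge_def by auto
  then show ?thesis using child_verts'[OF ev, of False] child_verts'[OF ev, of True]
    by (cases "sub t e") auto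
qed

definition rem :: "btree \<Rightarrow> real \<Rightarrow> bool list \<Rightarrow> bool list set \<Rightarrow> real" where
  "rem t p v S = (if v@[False] \<in> verts t \<and> v@[False] \<notin> S \<and> v@[True] \<in> verts t \<and> v@[True] \<notin> S then tauT p (sub t v)
     else if v@[False] \<in> verts t \<and> v@[False] \<notin> S then tauT p (sub t (v@[False])) + 2/p
     else if v@[True] \<in> verts t \<and> v@[True] \<notin> S then tauT p (sub t (v@[True])) + 2/p
     else 0)"

definition Gv :: "btree \<Rightarrow> real \<Rightarrow> bool list \<Rightarrow> real" where
  "Gv t p x = tauT p (sub t x) / 2 + LamT p (sub t x)"

lemma np_len: "\<not> prefix v e \<Longrightarrow> length v - Suc 0 < length v"
proof -
  assume "\<not> prefix v e"
  then have "v \<noteq> []" by auto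
  then show ?thesis by simp
qed

function Kf :: "btree \<Rightarrow> real \<Rightarrow> bool list \<Rightarrow> bool list \<Rightarrow> bool list set \<Rightarrow> real" where
  "Kf t p e v S = (if prefix v e then
       (if v @ [\<not> e ! length v] \<in> S then 1/p + Gv t p (v @ [e ! length v]) else Gv t p v)
     else rem t p v S + 1/p + Kf t p e (butlast v) S)"
  by auto
termination
  by (relation "Wellfounded.measure (\<lambda>(t,p,e,v,S). length v)") (simp_all add: np_len)

declare Kf.simps[simp del]

lemma rem_fresh:
  assumes "c \<in> verts t" "c @ [False] \<notin> S" "c @ [True] \<notin> S"
  shows "rem t p c S = tauT p (sub t c)"
  using assms child_verts'[OF assms(1)] sub_child'[OF assms(1)]
  by (cases "sub t c") (auto simp: rem_def)

lemma rem_insert_far: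
  assumes "length c \<noteq> Suc (length u)"
  shows "rem t p u (insert c S) = rem t p u S"
proof -
  have "c \<noteq> u @ [False]" "c \<noteq> u @ [True]" using assms by auto
  then show ?thesis unfolding rem_def by simp
qed

lemma Kf_insert_far:
  "length c > Suc (length u) \<Longrightarrow> Kf t p e u (insert c S) = Kf t p e u S"
proof (induction u rule: length_induct)
  case (1 u)
  show ?case
  proof (cases "prefix u e")
    case True then show ?thesis using "1.prems" by (subst (1 2) Kf.simps) auto
  next
    case False
    then have "u \<noteq> []" by auto
    then have "length (butlast u) < length u" by simp
    then have IH: "Kf t p e (butlast u) (insert c S) = Kf t p e (butlast u) S"
      using "1.IH" "1.prems" by auto
    show ?thesis using False IH rem_insert_far[of c u t p S] "1.prems" by (subst (1 2) Kf.simps) auto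
  qed
qed

lemma alpha_range: "0 \<le> alpha_at t p v" "alpha_at t p v \<le> 1"
  unfolding alpha_at_def by (auto split: btree.splits simp: Let_def)

lemma Psi:
  fixes f :: "bool list \<Rightarrow> bool list set \<Rightarrow> real"
  assumes I: "Inv t v S"
  shows "measure_pmf.expectation (sig t p v S A) (\<lambda>x. f (move t A v x) (S \<union> newE v (move t A v x))) =
    (if (v@[False] \<in> verts t \<and> v@[False] \<notin> S) \<and> (v@[True] \<in> verts t \<and> v@[True] \<notin> S) \<and> v@[False] \<in> A \<and> v@[True] \<in> A
       then alpha_at t p v * f (v@[False]) (insert (v@[False]) S) + (1 - alpha_at t p v) * f (v@[True]) (insert (v@[True]) S)
     else if (v@[False] \<in> verts t \<and> v@[False] \<notin> S) \<and> v@[False] \<in> A then f (v@[False]) (insert (v@[False]) S)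
     else if (v@[True] \<in> verts t \<and> v@[True] \<notin> S) \<and> v@[True] \<in> A then f (v@[True]) (insert (v@[True]) S)
     else if (v@[False] \<in> verts t \<and> v@[False] \<notin> S) \<or> (v@[True] \<in> verts t \<and> v@[True] \<notin> S) then f v S
     else if v \<noteq> [] \<and> v \<in> A then f (butlast v) S
     else f v S)"
proof -
  have m0: "move t A v (v@[False]) = v@[False]" if "v@[False] \<in> verts t" "v@[False] \<in> A"
    using move_down[OF refl that] .
  have m1: "move t A v (v@[True]) = v@[True]" if "v@[True] \<in> verts t" "v@[True] \<in> A"
    using move_down[OF refl that] .
  have mu: "move t A v (butlast v) = butlast v" if "v \<noteq> []" "v \<in> A"
    using move_up[OF that] .
  have su: "S \<union> newE v (butlast v) = S" if "v \<noteq> []" using Inv_vS[OF I that] by (simp add: newE_up[OF that] insert_absorb)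
  have ar: "0 \<le> alpha_at t p v" "alpha_at t p v \<le> 1" by (rule alpha_range)+
  define c0 where "c0 = v@[False]"
  define c1 where "c1 = v@[True]"
  define u0 where "u0 = (c0 \<in> verts t \<and> c0 \<notin> S)"
  define u1 where "u1 = (c1 \<in> verts t \<and> c1 \<notin> S)"
  define al where "al = alpha_at t p v"
  define g where "g = (\<lambda>x. f (move t A v x) (S \<union> newE v (move t A v x)))"
  have sg: "sig t p v S A = (if u0 \<and> u1 \<and> c0 \<in> A \<and> c1 \<in> A then map_pmf (\<lambda>b. if b then c0 else c1) (bernoulli_pmf al)
     else if u0 \<and> c0 \<in> A then return_pmf c0
     else if u1 \<and> c1 \<in> A then return_pmf c1
     else if u0 \<or> u1 then return_pmf v
     else if v \<noteq> [] \<and> v \<in> A then return_pmf (butlast v) else return_pmf v)"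
    unfolding sig_def Let_def c0_def c1_def u0_def u1_def al_def ..
  have g0: "g c0 = f c0 (insert c0 S)" if "u0" "c0 \<in> A" using m0 that unfolding g_def c0_def u0_def by simp
  have g1: "g c1 = f c1 (insert c1 S)" if "u1" "c1 \<in> A" using m1 that unfolding g_def c1_def u1_def by simp
  have gv: "g v = f v S" unfolding g_def by simp
  have gu: "g (butlast v) = f (butlast v) S" if "v \<noteq> []" "v \<in> A" using mu[OF that] su[OF that(1)] unfolding g_def by simp
  have "measure_pmf.expectation (sig t p v S A) g =
    (if u0 \<and> u1 \<and> c0 \<in> A \<and> c1 \<in> A then al * f c0 (insert c0 S) + (1 - al) * f c1 (insert c1 S)
     else if u0 \<and> c0 \<in> A then f c0 (insert c0 S)
     else if u1 \<and> c1 \<in> A then f c1 (insert c1 S)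
     else if u0 \<or> u1 then f v S
     else if v \<noteq> [] \<and> v \<in> A then f (butlast v) S
     else f v S)"
  proof (cases "u0 \<and> u1 \<and> c0 \<in> A \<and> c1 \<in> A")
    case True
    have "measure_pmf.expectation (sig t p v S A) g = measure_pmf.expectation (bernoulli_pmf al) (\<lambda>b. g (if b then c0 else c1))"
      unfolding sg using True by simp
    also have "\<dots> = g c0 * al + g c1 * (1 - al)" using ar unfolding al_def by simp
    finally show ?thesis using True g0 g1 by (simp add: mult.commute)
  next
    case F1: False
    show ?thesis
    proof (cases "u0 \<and> c0 \<in> A")
      case T2: True
      show ?thesis unfolding sg if_not_P[OF F1] if_P[OF T2] using T2 g0 by simp
    next
      case F2: False
      show ?thesis
      proof (cases "u1 \<and> c1 \<in> A")
        case T3: True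
        show ?thesis unfolding sg if_not_P[OF F1] if_not_P[OF F2] if_P[OF T3] using T3 g1 by simp
      next
        case F3: False
        show ?thesis
        proof (cases "u0 \<or> u1")
          case T4: True
          show ?thesis unfolding sg if_not_P[OF F1] if_not_P[OF F2] if_not_P[OF F3] if_P[OF T4] using gv by simp
        next
          case F4: False
          show ?thesis
          proof (cases "v \<noteq> [] \<and> v \<in> A")
            case T5: True
            show ?thesis unfolding sg if_not_P[OF F1] if_not_P[OF F2] if_not_P[OF F3] if_not_P[OF F4] if_P[OF T5]
              using T5 gu by simp
          next
            case F5: False
            show ?thesis unfolding sg if_not_P[OF F1] if_not_P[OF F2] if_not_P[OF F3] if_not_P[OF F4] if_not_P[OF F5]
              using gv by simp
          qed
        qed
      qed
    qed
  qed
  then show ?thesis unfolding g_def c0_def c1_def u0_def u1_def al_def .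
qed

lemma step_cases:
  fixes f :: "bool list \<Rightarrow> bool list set \<Rightarrow> real"
  assumes I: "Inv t v S" and p: "0 \<le> p" "p \<le> 1"
  defines "E \<equiv> measure_pmf.expectation (config t p) (\<lambda>A. measure_pmf.expectation (sig t p v S A) (\<lambda>x. f (move t A v x) (S \<union> newE v (move t A v x))))"
    and "c0 \<equiv> v@[False]" and "c1 \<equiv> v@[True]"
    and "u0 \<equiv> (v@[False] \<in> verts t \<and> v@[False] \<notin> S)" and "u1 \<equiv> (v@[True] \<in> verts t \<and> v@[True] \<notin> S)"
    and "al \<equiv> alpha_at t p v"
  shows step_both: "u0 \<Longrightarrow> u1 \<Longrightarrow> E = p*p*(al * f c0 (insert c0 S) + (1-al) * f c1 (insert c1 S)) + p*(1-p)*f c0 (insert c0 S) + (1-p)*p*f c1 (insert c1 S) + (1-p)*(1-p)* f v S"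
    and step_left: "u0 \<Longrightarrow> \<not> u1 \<Longrightarrow> E = p * f c0 (insert c0 S) + (1-p) * f v S"
    and step_right: "\<not> u0 \<Longrightarrow> u1 \<Longrightarrow> E = p * f c1 (insert c1 S) + (1-p) * f v S"
    and step_up: "\<not> u0 \<Longrightarrow> \<not> u1 \<Longrightarrow> v \<noteq> [] \<Longrightarrow> E = p * f (butlast v) S + (1-p) * f v S"
proof -
  have ne: "c0 \<noteq> c1" unfolding c0_def c1_def by simp
  have e0: "c0 \<in> edges t" if "u0" using that unfolding u0_def c0_def edges_def by simp
  have e1: "c1 \<in> edges t" if "u1" using that unfolding u1_def c1_def edges_def by simp
  have ev: "v \<in> edges t" if "v \<noteq> []" using that Inv_verts[OF I] unfolding edges_def by simp
  note Ps = Psi[OF I, of p _ f]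
  {
    assume u: "u0" "u1"
    define g where "g = (\<lambda>a b. if a \<and> b then al * f c0 (insert c0 S) + (1-al) * f c1 (insert c1 S)
        else if a then f c0 (insert c0 S) else if b then f c1 (insert c1 S) else f v S)"
    have "E = measure_pmf.expectation (config t p) (\<lambda>A. g (c0 \<in> A) (c1 \<in> A))"
      unfolding E_def Ps
      by (rule arg_cong[where f="measure_pmf.expectation (config t p)"], rule ext) (simp add: g_def u[unfolded u0_def u1_def] c0_def c1_def al_def)
    also have "\<dots> = p*p*g True True + p*(1-p)*g True False + (1-p)*p*g False True + (1-p)*(1-p)*g False False"
      by (rule exp_config_pair[OF e0[OF u(1)] e1[OF u(2)] ne p])
    finally show "E = p*p*(al * f c0 (insert c0 S) + (1-al) * f c1 (insert c1 S)) + p*(1-p)*f c0 (insert c0 S) + (1-p)*p*f c1 (insert c1 S) + (1-p)*(1-p)* f v S"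
      by (simp add: g_def)
  }
  {
    assume u: "u0" "\<not> u1"
    define g where "g = (\<lambda>a. if a then f c0 (insert c0 S) else f v S)"
    have "E = measure_pmf.expectation (config t p) (\<lambda>A. g (c0 \<in> A))"
      unfolding E_def Ps
      by (rule arg_cong[where f="measure_pmf.expectation (config t p)"], rule ext) (simp add: g_def u[unfolded u0_def u1_def] c0_def c1_def al_def)
    also have "\<dots> = p * g True + (1-p) * g False" by (rule exp_config_single[OF e0[OF u(1)] p])
    finally show "E = p * f c0 (insert c0 S) + (1-p) * f v S" by (simp add: g_def)
  }
  {
    assume u: "\<not> u0" "u1"
    define g where "g = (\<lambda>a. if a then f c1 (insert c1 S) else f v S)"
    have "E = measure_pmf.expectation (config t p) (\<lambda>A. g (c1 \<in> A))"
      unfolding E_def Ps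
      by (rule arg_cong[where f="measure_pmf.expectation (config t p)"], rule ext) (simp add: g_def u[unfolded u0_def u1_def] c0_def c1_def al_def)
    also have "\<dots> = p * g True + (1-p) * g False" by (rule exp_config_single[OF e1[OF u(2)] p])
    finally show "E = p * f c1 (insert c1 S) + (1-p) * f v S" by (simp add: g_def)
  }
  {
    assume u: "\<not> u0" "\<not> u1" "v \<noteq> []"
    define g where "g = (\<lambda>a. if a then f (butlast v) S else f v S)"
    have "E = measure_pmf.expectation (config t p) (\<lambda>A. g (v \<in> A))"
      unfolding E_def Ps
      by (rule arg_cong[where f="measure_pmf.expectation (config t p)"], rule ext) (simp add: g_def u[unfolded u0_def u1_def] c0_def c1_def al_def)
    also have "\<dots> = p * g True + (1-p) * g False" by (rule exp_config_single[OF ev[OF u(3)] p])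
    finally show "E = p * f (butlast v) S + (1-p) * f v S" by (simp add: g_def)
  }
qed

lemma alg_core:
  fixes P q t1 t2 x y G Gl d :: real
  assumes P: "0 < P" "P \<le> 1" and q: "q = P*(2-P)" and t: "0 < t1" "0 < t2"
    and G: "G = ((t1 - 2/P) + (t2 - 2/P) + 3/P + 1/q)/2 + (t1/(t1+t2)*x + t2/(t1+t2)*y + 1/2*(1/q - 1/P))"
    and Gl: "Gl = (t1 - 2/P)/2 + x"
    and d: "d = (x - y)/(t1+t2)"
  shows "q * G = 1 + q * Gl + q * (t2 * (1/2 - d))"
proof -
  have q0: "q \<noteq> 0" using P q by simp
  have s0: "t1 + t2 \<noteq> 0" using t by simp
  have P0: "P \<noteq> 0" using P by simp
  have G2: "G = (t1 + t2)/2 + 1/q + (t1*x + t2*y)/(t1+t2) - 1/P"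
  proof -
    have w: "t1/(t1+t2)*x + t2/(t1+t2)*y = (t1*x+t2*y)/(t1+t2)" by (simp add: add_divide_distrib)
    have pp: "2/P = 2*(1/P)" "3/P = 3*(1/P)" by simp_all
    have lin: "\<And>ip iq W::real. (t1 - 2*ip + (t2 - 2*ip) + 3*ip + iq)/2 + (W + 1/2*(iq - ip)) = (t1+t2)/2 + iq + W - ip"
      by (simp add: field_simps)
    show ?thesis unfolding G w pp by (rule lin)
  qed
  have "(t1*x + t2*y)/(t1+t2) = x - t2 * d"
    unfolding d using s0 by (simp add: field_simps)
  note wd = this
  have p2: "2/P = 2*(1/P)" by simp
  have G3: "G = 1/q + Gl + t2/2 - t2 * d"
  proof -
    have lin2: "\<And>ip iq W G' Gl'::real. G' = (t1+t2)/2 + iq + W - ip \<Longrightarrow> Gl' = (t1 - 2*ip)/2 + x \<Longrightarrow> W = x - t2*d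
       \<Longrightarrow> G' = iq + Gl' + t2/2 - t2*d"
      by (simp add: field_simps)
    show ?thesis using lin2[OF G2 Gl[unfolded p2] wd] .
  qed
  show ?thesis unfolding G3 using q0 by (simp add: field_simps)
qed

lemma alg_both_L:
  fixes P q t1 t2 x y G Gl al :: real
  assumes P: "0 < P" "P \<le> 1" and q: "q = 1-(1-P)^2" and t: "0 < t1" "0 < t2"
    and G: "G = ((t1 - 2/P) + (t2 - 2/P) + 3/P + 1/q)/2 + (t1/(t1+t2)*x + t2/(t1+t2)*y + 1/2*(1/q - 1/P))"
    and Gl: "Gl = (t1 - 2/P)/2 + x"
    and al: "al = 1/2 + (x - y)/(t1+t2) * (q/P^2)"
  shows "P*P*(al*Gl + (1-al)*(t2 + Gl)) + P*(1-P)*Gl + (1-P)*P*(t2 + Gl) + (1-P)*(1-P)*G = G - 1"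
proof -
  define d where "d = (x - y)/(t1+t2)"
  have qq: "q = P*(2-P)" unfolding q by (simp add: power2_eq_square algebra_simps)
  have core: "q * G = 1 + q * Gl + q * (t2 * (1/2 - d))"
    by (rule alg_core[OF P qq t G Gl d_def])
  have h1: "P*P*(1-al) + P*(1-P) = q*(1/2 - d)"
    unfolding al d_def[symmetric] qq using P by (simp add: field_simps power2_eq_square)
  have e1: "P*P*(al*Gl + (1-al)*(t2 + Gl)) + P*(1-P)*Gl + (1-P)*P*(t2 + Gl) + (1-P)*(1-P)*G
      = Gl*(P*P + 2*P*(1-P)) + t2*(P*P*(1-al) + P*(1-P)) + (1-P)*(1-P)*G"
    by (simp add: algebra_simps)
  have e2: "P*P + 2*P*(1-P) = q" unfolding qq by (simp add: algebra_simps)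
  have e3: "(1-P)*(1-P) = 1 - q" unfolding qq by (simp add: algebra_simps)
  have e4: "P*P*(al*Gl + (1-al)*(t2 + Gl)) + P*(1-P)*Gl + (1-P)*P*(t2 + Gl) + (1-P)*(1-P)*G
      = Gl*q + t2*(q*(1/2 - d)) + (1-q)*G"
    by (subst e1, subst e2, subst e3, subst h1, rule refl)
  show ?thesis unfolding e4 using core by (simp add: algebra_simps)
qed

lemma alg_both_R:
  fixes P q t1 t2 x y G Gr al :: real
  assumes P: "0 < P" "P \<le> 1" and q: "q = 1-(1-P)^2" and t: "0 < t1" "0 < t2"
    and G: "G = ((t1 - 2/P) + (t2 - 2/P) + 3/P + 1/q)/2 + (t1/(t1+t2)*x + t2/(t1+t2)*y + 1/2*(1/q - 1/P))"
    and Gr: "Gr = (t2 - 2/P)/2 + y"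
    and al: "al = 1/2 + (x - y)/(t1+t2) * (q/P^2)"
  shows "P*P*(al*(t1 + Gr) + (1-al)*Gr) + P*(1-P)*(t1 + Gr) + (1-P)*P*Gr + (1-P)*(1-P)*G = G - 1"
proof -
  have G': "G = ((t2 - 2/P) + (t1 - 2/P) + 3/P + 1/q)/2 + (t2/(t2+t1)*y + t1/(t2+t1)*x + 1/2*(1/q - 1/P))"
    unfolding G by (simp add: algebra_simps)
  have yx: "(y - x)/(t2+t1) = - ((x - y)/(t1+t2))" by (simp add: add.commute minus_divide_left)
  have al': "1 - al = 1/2 + (y - x)/(t2+t1) * (q/P^2)"
    unfolding al yx by simp
  have "P*P*((1-al)*Gr + (1-(1-al))*(t1 + Gr)) + P*(1-P)*Gr + (1-P)*P*(t1 + Gr) + (1-P)*(1-P)*G = G - 1"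
    by (rule alg_both_L[OF P q t(2) t(1) G' Gr al'])
  then show ?thesis by (simp add: algebra_simps)
qed

lemma alg_single: fixes p Y :: real assumes "0 < p" shows "p*Y + (1-p)*(Y + 1/p) = (Y + 1/p) - 1"
proof -
  have "(1-p)*(1/p) = 1/p - 1" using assms by (simp add: field_simps)
  then show ?thesis by (simp add: algebra_simps)
qed

lemma alg_off_both:
  fixes P q X al :: real
  assumes P: "0 < P" "P \<le> 1" and q: "q = 1-(1-P)^2"
  shows "P*P*(al*X + (1-al)*X) + P*(1-P)*X + (1-P)*P*X + (1-P)*(1-P)*(X + 1/q) = (X + 1/q) - 1"
proof -
  have qq: "q = P*(2-P)" unfolding q by (simp add: power2_eq_square algebra_simps)
  have q0: "q \<noteq> 0" using P qq by simp
  have e1: "P*P*(al*X + (1-al)*X) + P*(1-P)*X + (1-P)*P*X + (1-P)*(1-P)*(X + 1/q) = (P*P + 2*P*(1-P))*X + (1-P)*(1-P)*(X + 1/q)"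
    by (simp add: algebra_simps)
  have e2: "P*P + 2*P*(1-P) = q" unfolding qq by (simp add: algebra_simps)
  have e3: "(1-P)*(1-P) = 1 - q" unfolding qq by (simp add: algebra_simps)
  have e4: "(1 - q) * (1/q) = 1/q - 1" using q0 by (simp add: field_simps)
  have e5: "P*P*(al*X + (1-al)*X) + P*(1-P)*X + (1-P)*P*X + (1-P)*(1-P)*(X + 1/q) = q*X + (1-q)*(X + 1/q)"
    by (subst e1, subst e2, subst e3, rule refl)
  have e6: "(1-q)*(X + 1/q) = (1-q)*X + (1/q - 1)" using e4 by (simp only: distrib_left)
  show ?thesis unfolding e5 e6 by (simp add: algebra_simps)
qed

definition Fs :: "btree \<Rightarrow> real \<Rightarrow> bool list \<Rightarrow> bool list \<Rightarrow> bool list set \<Rightarrow> real" where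
  "Fs t p e v S = (if Inv t v S \<and> e \<notin> S then Kf t p e v S else 0)"

lemma leaf_edges: "leaf_edge t e \<Longrightarrow> e \<in> edges t" "leaf_edge t e \<Longrightarrow> e \<noteq> []" "leaf_edge t e \<Longrightarrow> e \<in> verts t"
  unfolding leaf_edge_def edges_def by auto

lemma Gv_leaf: "leaf_edge t e \<Longrightarrow> Gv t p e = 0"
  using leaf_sub by (simp add: Gv_def)

lemma path_child:
  assumes I: "Inv t v S" and eS: "e \<notin> S" and L: "leaf_edge t e" and pv: "prefix v e"
  shows "prefix (v @ [e ! length v]) e" "v @ [e ! length v] \<in> verts t" "v @ [e ! length v] \<notin> S"
proof -
  have ve: "v \<noteq> e"
  proof
    assume "v = e"
    then have "e \<in> S" using InvD(3)[OF I, of e] leaf_edges(2)[OF L] by simp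
    then show False using eS by simp
  qed
  obtain w where w: "e = v @ w" using pv by (auto simp: prefix_def)
  with ve obtain b w' where bw: "w = b # w'" by (cases w) auto
  have b: "e ! length v = b" using w bw by simp
  show pc: "prefix (v @ [e ! length v]) e" unfolding b using w bw by (simp add: prefix_def)
  show "v @ [e ! length v] \<in> verts t" unfolding b using leaf_edges(3)[OF L] w bw verts_prefix[of "v @ [b]" w' t] by simp
  show "v @ [e ! length v] \<notin> S"
  proof
    assume c: "v @ [e ! length v] \<in> S"
    have "\<not> prefix (v @ [e ! length v]) v" by (simp add: prefix_def)
    then have "e \<in> S" using InvD(5)[OF I c _ leaf_edges(1)[OF L] pc] by blast
    then show False using eS by simp
  qed
qed

lemma Fs_path_child:
  assumes I: "Inv t v S" and eS: "e \<notin> S" and L: "leaf_edge t e"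
    and c: "c = v @ [b]" "c \<in> verts t" "c \<notin> S" "prefix c e"
  shows "Fs t p e c (insert c S) = Gv t p c"
proof -
  have I': "Inv t c (insert c S)" by (rule Inv_down[OF I c(1-3)])
  show ?thesis
  proof (cases "c = e")
    case True then show ?thesis using Gv_leaf[OF L] by (simp add: Fs_def)
  next
    case False
    then have eS': "e \<notin> insert c S" using eS by simp
    have cne: "c \<noteq> []" using c(1) by simp
    have n1: "c @ [\<not> e ! length c] \<notin> S" using Inv_fresh[OF I c(3) cne, of "c @ [\<not> e ! length c]"] by (simp add: prefix_def)
    have n2: "c @ [\<not> e ! length c] \<noteq> c" by simp
    show ?thesis using I' eS' n1 n2 c(4) unfolding Fs_def by (subst Kf.simps) simp
  qed
qed

lemma Fs_off_child:
  assumes I: "Inv t v S" and eS: "e \<notin> S"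
    and c: "c = v @ [b]" "c \<in> verts t" "c \<notin> S" "\<not> prefix c e"
  shows "Fs t p e c (insert c S) = tauT p (sub t c) + 1/p + Kf t p e v (insert c S)"
proof -
  have I': "Inv t c (insert c S)" by (rule Inv_down[OF I c(1-3)])
  have ce: "c \<noteq> e" using c(4) by auto
  then have eS': "e \<notin> insert c S" using eS by simp
  have cne: "c \<noteq> []" using c(1) by simp
  have f: "c @ [b'] \<notin> insert c S" for b'
    using Inv_fresh[OF I c(3) cne, of "c @ [b']"] by (simp add: prefix_def)
  have r: "rem t p c (insert c S) = tauT p (sub t c)" by (rule rem_fresh[OF c(2) f f])
  have bl: "butlast c = v" using c(1) by simp
  show ?thesis using I' eS' c(4) unfolding Fs_def by (subst Kf.simps) (simp add: r bl)
qed

lemma onestep: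
  assumes I: "Inv t v S" and eS: "e \<notin> S" and L: "leaf_edge t e" and p: "p0_of t \<le> p" "p \<le> 1"
  shows "measure_pmf.expectation (config t p) (\<lambda>A. measure_pmf.expectation (sig t p v S A)
           (\<lambda>x. Fs t p e (move t A v x) (S \<union> newE v (move t A v x)))) = Kf t p e v S - 1"
proof -
  have p0: "0 < p" using p p0_of_props(1)[of t] by linarith
  have pp: "0 \<le> p" using p0 by simp
  note SC = step_cases[OF I pp p(2), where f="Fs t p e"]
  have Fv: "Fs t p e v S = Kf t p e v S" using I eS by (simp add: Fs_def)
  have vv: "v \<in> verts t" by (rule Inv_verts[OF I])
  note cv = child_verts'[OF vv]
  note sc = sub_child'[OF vv]
  show ?thesis
  proof (cases "prefix v e")
    case True
    define b where "b = e ! length v"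
    define ce where "ce = v @ [b]"
    define co where "co = v @ [\<not>b]"
    have ce: "prefix ce e" "ce \<in> verts t" "ce \<notin> S" using path_child[OF I eS L True] unfolding ce_def b_def by auto
    have Fce: "Fs t p e ce (insert ce S) = Gv t p ce" by (rule Fs_path_child[OF I eS L ce_def ce(2) ce(3) ce(1)])
    have Kv: "Kf t p e v S = (if co \<in> S then 1/p + Gv t p ce else Gv t p v)"
      using True by (subst Kf.simps) (simp add: co_def ce_def b_def)
    have co_np: "\<not> prefix co e"
    proof
      assume "prefix co e"
      then have "prefix ce co \<or> prefix co ce" using prefix_same_cases ce(1) by blast
      then show False by (auto simp: ce_def co_def prefix_def)
    qed
    show ?thesis
    proof (cases "co \<in> S")
      case coS: True
      have Kv': "Kf t p e v S = 1/p + Gv t p ce" using Kv coS by simp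
      show ?thesis
      proof (cases b)
        case True
        have u: "\<not> (v@[False] \<in> verts t \<and> v@[False] \<notin> S)" "v@[True] \<in> verts t \<and> v@[True] \<notin> S"
          using coS ce True unfolding co_def ce_def by auto
        show ?thesis unfolding SC(3)[OF u] using Fce Fv Kv' alg_single[OF p0, of "Gv t p ce"] True
          by (simp add: ce_def algebra_simps)
      next
        case False
        have u: "v@[False] \<in> verts t \<and> v@[False] \<notin> S" "\<not> (v@[True] \<in> verts t \<and> v@[True] \<notin> S)"
          using coS ce False unfolding co_def ce_def by auto
        show ?thesis unfolding SC(2)[OF u] using Fce Fv Kv' alg_single[OF p0, of "Gv t p ce"] False
          by (simp add: ce_def algebra_simps)
      qed
    next
      case coS: False
      have Kv': "Kf t p e v S = Gv t p v" using Kv coS by simp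
      show ?thesis
      proof (cases "co \<in> verts t")
        case coV: False
        obtain s where s: "sub t v = Node1 s" and bF: "b = False"
          using cv[of b] cv[of "\<not>b"] ce(2) coV unfolding ce_def co_def
          by (cases "sub t v") auto
        have sce: "sub t ce = s" using sc[of b] s bF unfolding ce_def by simp
        have Gvv: "Gv t p v = 1/p + Gv t p ce" unfolding Gv_def s sce by simp
        have u: "v@[False] \<in> verts t \<and> v@[False] \<notin> S" "\<not> (v@[True] \<in> verts t \<and> v@[True] \<notin> S)"
          using coV ce bF unfolding co_def ce_def by auto
        show ?thesis unfolding SC(2)[OF u] using Fce Fv Kv' Gvv alg_single[OF p0, of "Gv t p ce"] bF
          by (simp add: ce_def algebra_simps)
      next
        case coV: True
        obtain l r where s: "sub t v = Node2 l r"
          using cv[of b] cv[of "\<not>b"] ce(2) coV unfolding ce_def co_def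
          by (cases "sub t v") auto
        have Fco: "Fs t p e co (insert co S) = tauT p (sub t co) + 1/p + Kf t p e v (insert co S)"
          by (rule Fs_off_child[OF I eS co_def coV coS co_np])
        have Kco: "Kf t p e v (insert co S) = 1/p + Gv t p ce"
          using True by (subst Kf.simps) (simp add: co_def ce_def b_def)
        define q where "q = 1-(1-p)^2"
        define t1 where "t1 = tauT p l + 2/p"
        define t2 where "t2 = tauT p r + 2/p"
        have t1: "0 < t1" unfolding t1_def using tauT_nonneg[OF p0 p(2), of l] p0 by (simp add: add_nonneg_pos)
        have t2: "0 < t2" unfolding t2_def using tauT_nonneg[OF p0 p(2), of r] p0 by (simp add: add_nonneg_pos)
        have al: "alpha_at t p v = 1/2 + (LamT p l - LamT p r)/(t1+t2) * (q/p^2)"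
          unfolding alpha_unclipped[OF p s] t1_def t2_def q_def ..
        have G: "Gv t p v = ((t1 - 2/p) + (t2 - 2/p) + 3/p + 1/q)/2 + (t1/(t1+t2)*LamT p l + t2/(t1+t2)*LamT p r + 1/2*(1/q - 1/p))"
          unfolding Gv_def s t1_def t2_def q_def by (simp add: Let_def)
        have u: "v@[False] \<in> verts t \<and> v@[False] \<notin> S" "v@[True] \<in> verts t \<and> v@[True] \<notin> S"
          using coV coS ce unfolding co_def ce_def by (cases b; auto)+
        have sl: "sub t (v@[False]) = l" and sr: "sub t (v@[True]) = r" using sc s by auto
        show ?thesis
        proof (cases b)
          case False
          have Gl: "Gv t p ce = (t1 - 2/p)/2 + LamT p l" using False sl unfolding Gv_def ce_def t1_def by simp
          have F1: "Fs t p e (v@[True]) (insert (v@[True]) S) = t2 + Gv t p ce"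
            using Fco Kco False sr unfolding co_def t2_def by simp
          have F0: "Fs t p e (v@[False]) (insert (v@[False]) S) = Gv t p ce" using Fce False unfolding ce_def by simp
          have "p*p*(alpha_at t p v * Gv t p ce + (1-alpha_at t p v)*(t2 + Gv t p ce)) + p*(1-p)*Gv t p ce + (1-p)*p*(t2 + Gv t p ce) + (1-p)*(1-p)*Gv t p v = Gv t p v - 1"
            by (rule alg_both_L[OF p0 p(2) q_def t1 t2 G Gl al])
          then show ?thesis unfolding SC(1)[OF u] F0 F1 Fv Kv' .
        next
          case True
          have Gr: "Gv t p ce = (t2 - 2/p)/2 + LamT p r" using True sr unfolding Gv_def ce_def t2_def by simp
          have F0: "Fs t p e (v@[False]) (insert (v@[False]) S) = t1 + Gv t p ce"
            using Fco Kco True sl unfolding co_def t1_def by simp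
          have F1: "Fs t p e (v@[True]) (insert (v@[True]) S) = Gv t p ce" using Fce True unfolding ce_def by simp
          have "p*p*(alpha_at t p v * (t1 + Gv t p ce) + (1-alpha_at t p v)*Gv t p ce) + p*(1-p)*(t1 + Gv t p ce) + (1-p)*p*Gv t p ce + (1-p)*(1-p)*Gv t p v = Gv t p v - 1"
            by (rule alg_both_R[OF p0 p(2) q_def t1 t2 G Gr al])
          then show ?thesis unfolding SC(1)[OF u] F0 F1 Fv Kv' .
        qed
      qed
    qed
  next
    case False
    have vne: "v \<noteq> []" using False by auto
    define K0 where "K0 = Kf t p e (butlast v) S"
    have Kv: "Kf t p e v S = rem t p v S + 1/p + K0"
      using False unfolding K0_def by (subst Kf.simps) simp
    have np: "\<not> prefix (v@[b]) e" for b
      using False prefix_order.trans[of v "v@[b]" e] by (auto simp: prefix_def)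
    have far: "Kf t p e (butlast v) (insert (v@[b]) S) = K0" for b
      unfolding K0_def using vne by (intro Kf_insert_far) simp
    have Kins: "Kf t p e v (insert (v@[b]) S) = rem t p v (insert (v@[b]) S) + 1/p + K0" for b
      using False far by (subst Kf.simps) simp
    show ?thesis
    proof (cases "v@[False] \<in> verts t \<and> v@[False] \<notin> S")
      case u0: True
      show ?thesis
      proof (cases "v@[True] \<in> verts t \<and> v@[True] \<notin> S")
        case u1: True
        obtain l r where s: "sub t v = Node2 l r" using cv[of True] u1 by (cases "sub t v") auto
        have sl: "sub t (v@[False]) = l" and sr: "sub t (v@[True]) = r" using sc s by auto
        define q where "q = 1-(1-p)^2"
        have rv: "rem t p v S = tauT p l + tauT p r + 3/p + 1/q" using u0 u1 s unfolding rem_def q_def by simp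
        have r0: "rem t p v (insert (v@[False]) S) = tauT p r + 2/p" using u1 sr unfolding rem_def by simp
        have r1: "rem t p v (insert (v@[True]) S) = tauT p l + 2/p" using u0 sl unfolding rem_def by simp
        define X where "X = tauT p l + tauT p r + 4/p + K0"
        have F0: "Fs t p e (v@[False]) (insert (v@[False]) S) = X"
          using Fs_off_child[OF I eS refl _ _ np, of False] u0 Kins[of False] r0 sl unfolding X_def by simp
        have F1: "Fs t p e (v@[True]) (insert (v@[True]) S) = X"
          using Fs_off_child[OF I eS refl _ _ np, of True] u1 Kins[of True] r1 sr unfolding X_def by simp
        have Kv': "Kf t p e v S = X + 1/q" unfolding Kv rv X_def by simp
        show ?thesis unfolding SC(1)[OF u0 u1] F0 F1 Fv Kv'
          by (rule alg_off_both[OF p0 p(2) q_def])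
      next
        case u1: False
        have rv: "rem t p v S = tauT p (sub t (v@[False])) + 2/p" using u0 u1 unfolding rem_def by auto
        have r0: "rem t p v (insert (v@[False]) S) = 0" using u1 unfolding rem_def by auto
        have F0: "Fs t p e (v@[False]) (insert (v@[False]) S) = tauT p (sub t (v@[False])) + 2/p + K0"
          using Fs_off_child[OF I eS refl _ _ np, of False] u0 Kins[of False] r0 by simp
        show ?thesis unfolding SC(2)[OF u0 u1] F0 Fv Kv rv
          using alg_single[OF p0, of "tauT p (sub t (v@[False])) + 2/p + K0"] by (simp add: algebra_simps)
      qed
    next
      case u0: False
      show ?thesis
      proof (cases "v@[True] \<in> verts t \<and> v@[True] \<notin> S")
        case u1: True
        have rv: "rem t p v S = tauT p (sub t (v@[True])) + 2/p" using u0 u1 unfolding rem_def by auto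
        have r1: "rem t p v (insert (v@[True]) S) = 0" using u0 unfolding rem_def by auto
        have F1: "Fs t p e (v@[True]) (insert (v@[True]) S) = tauT p (sub t (v@[True])) + 2/p + K0"
          using Fs_off_child[OF I eS refl _ _ np, of True] u1 Kins[of True] r1 by simp
        show ?thesis unfolding SC(3)[OF u0 u1] F1 Fv Kv rv
          using alg_single[OF p0, of "tauT p (sub t (v@[True])) + 2/p + K0"] by (simp add: algebra_simps)
      next
        case u1: False
        have rv: "rem t p v S = 0" using u0 u1 unfolding rem_def by auto
        have ch: "v @ [b] \<in> S" if "v @ [b] \<in> verts t" for b using that u0 u1 by (cases b) auto
        have Iu: "Inv t (butlast v) S" by (rule Inv_up[OF I vne ch])
        have Fu: "Fs t p e (butlast v) S = K0" using Iu eS unfolding Fs_def K0_def by simp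
        show ?thesis unfolding SC(4)[OF u0 u1 vne] Fu Fv Kv rv
          using alg_single[OF p0, of K0] by (simp add: algebra_simps)
      qed
    qed
  qed
qed

lemma int_bdd:
  fixes f :: "'a \<Rightarrow> real"
  assumes "\<And>x. \<bar>f x\<bar> \<le> B"
  shows "integrable (measure_pmf M) f"
  by (rule measure_pmf.integrable_const_bound[where B=B]) (use assms in auto)

lemma sig_support:
  assumes "x \<in> set_pmf (sig t p v S A)"
  shows "(x = v@[False] \<and> v@[False] \<in> verts t \<and> v@[False] \<notin> S \<and> v@[False] \<in> A)
       \<or> (x = v@[True] \<and> v@[True] \<in> verts t \<and> v@[True] \<notin> S \<and> v@[True] \<in> A)
       \<or> x = v
       \<or> (x = butlast v \<and> \<not> (v@[False] \<in> verts t \<and> v@[False] \<notin> S) \<and> \<not> (v@[True] \<in> verts t \<and> v@[True] \<notin> S) \<and> v \<noteq> [] \<and> v \<in> A)"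
  using assms unfolding sig_def Let_def by (auto split: if_splits)

lemma Inv_step:
  assumes I: "Inv t v S" and x: "x \<in> set_pmf (sig t p v S A)"
  shows "Inv t (move t A v x) (S \<union> newE v (move t A v x))"
  using sig_support[OF x]
proof (elim disjE conjE)
  assume a: "x = v@[False]" "v@[False] \<in> verts t" "v@[False] \<notin> S" "v@[False] \<in> A"
  then have "move t A v x = v@[False]" using move_down[of "v@[False]" v False t A] by simp
  then show ?thesis using Inv_down[OF I refl a(2,3)] by simp
next
  assume a: "x = v@[True]" "v@[True] \<in> verts t" "v@[True] \<notin> S" "v@[True] \<in> A"
  then have "move t A v x = v@[True]" using move_down[of "v@[True]" v True t A] by simp
  then show ?thesis using Inv_down[OF I refl a(2,3)] by simp
next
  assume "x = v" then show ?thesis using I by simp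
next
  assume a: "x = butlast v" "\<not> (v@[False] \<in> verts t \<and> v@[False] \<notin> S)" "\<not> (v@[True] \<in> verts t \<and> v@[True] \<notin> S)" "v \<noteq> []" "v \<in> A"
  have m: "move t A v x = butlast v" using a move_up[OF a(4,5)] by simp
  have ch: "v @ [b] \<in> S" if "v @ [b] \<in> verts t" for b using that a(2,3) by (cases b) auto
  have "S \<union> newE v (butlast v) = S" using Inv_vS[OF I a(4)] by (simp add: newE_up[OF a(4)] insert_absorb)
  then show ?thesis unfolding m using Inv_up[OF I a(4) ch] by simp
qed


lemma hist_support:
  "h \<in> set_pmf (hist_pmf t p (sigma_alpha t p) n) \<Longrightarrow> Inv t (pos h) (traversed h)"
proof (induction n arbitrary: h)
  case 0 then show ?case using Inv_init by simp
next
  case (Suc n)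
  then obtain h0 A x where h0: "h0 \<in> set_pmf (hist_pmf t p (sigma_alpha t p) n)"
    and x: "x \<in> set_pmf (sigma_alpha t p h0 A)" and h: "h = h0 @ [(A, move t A (pos h0) x)]"
    by auto
  have I0: "Inv t (pos h0) (traversed h0)" by (rule Suc.IH[OF h0])
  show ?case unfolding h pos_snoc snd_conv traversed_snoc
    using Inv_step[OF I0 x[unfolded sigma_sig]] by simp
qed

definition Fh :: "btree \<Rightarrow> real \<Rightarrow> bool list \<Rightarrow> hist \<Rightarrow> real" where
  "Fh t p e h = Fs t p e (pos h) (traversed h)"

lemma Fs_bound: "\<exists>B. \<forall>v S. \<bar>Fs t p e v S\<bar> \<le> B"
proof -
  define X where "X = insert 0 ((\<lambda>(v,S). \<bar>Kf t p e v S\<bar>) ` (verts t \<times> Pow (edges t)))"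
  have fX: "finite X" unfolding X_def by simp
  have "\<bar>Fs t p e v S\<bar> \<le> Max X" for v S
  proof (cases "Inv t v S \<and> e \<notin> S")
    case True
    then have "v \<in> verts t" "S \<subseteq> edges t" using InvD(1,2) by blast+
    then have "\<bar>Kf t p e v S\<bar> \<in> X" unfolding X_def by force
    then show ?thesis using True fX by (simp add: Fs_def)
  next
    case False
    have "0 \<in> X" unfolding X_def by simp
    moreover have "Fs t p e v S = 0" unfolding Fs_def by (rule if_not_P[OF False])
    ultimately show ?thesis using Max_ge[OF fX] by simp
  qed
  then show ?thesis by blast
qed

lemma step_hist:
  assumes I: "Inv t (pos h) (traversed h)" and L: "leaf_edge t e" and p: "p0_of t \<le> p" "p \<le> 1"
    and B: "\<And>v S. \<bar>Fs t p e v S\<bar> \<le> B"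
  shows "measure_pmf.expectation (bind_pmf (config t p) (\<lambda>A. map_pmf (\<lambda>x. h @ [(A, move t A (pos h) x)]) (sigma_alpha t p h A))) (Fh t p e)
       = Fh t p e h - (if e \<notin> traversed h then 1 else 0)"
proof -
  define v where "v = pos h"
  define S where "S = traversed h"
  have "measure_pmf.expectation (bind_pmf (config t p) (\<lambda>A. map_pmf (\<lambda>x. h @ [(A, move t A (pos h) x)]) (sigma_alpha t p h A))) (Fh t p e)
     = measure_pmf.expectation (config t p) (\<lambda>A. measure_pmf.expectation (map_pmf (\<lambda>x. h @ [(A, move t A (pos h) x)]) (sigma_alpha t p h A)) (Fh t p e))"
    by (rule integral_bind_pmf_bdd[where B=B]) (simp add: Fh_def B)
  also have "\<dots> = measure_pmf.expectation (config t p) (\<lambda>A. measure_pmf.expectation (sig t p v S A)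
           (\<lambda>x. Fs t p e (move t A v x) (S \<union> newE v (move t A v x))))"
    unfolding v_def S_def by (simp add: Fh_def traversed_snoc sigma_sig)
  finally have eq: "measure_pmf.expectation (bind_pmf (config t p) (\<lambda>A. map_pmf (\<lambda>x. h @ [(A, move t A (pos h) x)]) (sigma_alpha t p h A))) (Fh t p e)
     = measure_pmf.expectation (config t p) (\<lambda>A. measure_pmf.expectation (sig t p v S A)
           (\<lambda>x. Fs t p e (move t A v x) (S \<union> newE v (move t A v x))))" .
  show ?thesis
  proof (cases "e \<in> S")
    case True
    have "Fs t p e (move t A v x) (S \<union> newE v (move t A v x)) = 0" for A x using True by (simp add: Fs_def)
    moreover have "Fh t p e h = 0" using True unfolding Fh_def Fs_def S_def by simp
    ultimately show ?thesis unfolding eq using True S_def by simp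
  next
    case False
    have "Fh t p e h = Kf t p e v S" using False I unfolding Fh_def Fs_def v_def S_def by simp
    then show ?thesis unfolding eq onestep[OF I[folded v_def S_def] False L p] using False S_def by simp
  qed
qed

definition Dn :: "btree \<Rightarrow> real \<Rightarrow> bool list \<Rightarrow> nat \<Rightarrow> real" where
  "Dn t p e n = measure_pmf.expectation (hist_pmf t p (sigma_alpha t p) n) (Fh t p e)"

definition Pn :: "btree \<Rightarrow> real \<Rightarrow> bool list \<Rightarrow> nat \<Rightarrow> real" where
  "Pn t p e n = measure_pmf.prob (hist_pmf t p (sigma_alpha t p) n) {h. e \<notin> traversed h}"

lemma Pn_integral: "Pn t p e n = measure_pmf.expectation (hist_pmf t p (sigma_alpha t p) n) (indicator {h. e \<notin> traversed h})"
  unfolding Pn_def by simp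

lemma D_Suc:
  assumes L: "leaf_edge t e" and p: "p0_of t \<le> p" "p \<le> 1"
    and B: "\<And>v S. \<bar>Fs t p e v S\<bar> \<le> B"
  shows "Dn t p e (Suc n) = Dn t p e n - Pn t p e n"
proof -
  let ?M = "hist_pmf t p (sigma_alpha t p) n"
  have bF: "\<bar>Fh t p e h\<bar> \<le> B" for h by (simp add: Fh_def B)
  have "Dn t p e (Suc n) = measure_pmf.expectation ?M (\<lambda>h. measure_pmf.expectation
      (bind_pmf (config t p) (\<lambda>A. map_pmf (\<lambda>x. h @ [(A, move t A (pos h) x)]) (sigma_alpha t p h A))) (Fh t p e))"
    unfolding Dn_def hist_pmf.simps by (rule integral_bind_pmf_bdd[where B=B]) (rule bF)
  also have "\<dots> = measure_pmf.expectation ?M (\<lambda>h. Fh t p e h - indicator {h. e \<notin> traversed h} h)"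
    by (rule integral_cong_AE) (auto intro!: AE_pmfI simp: step_hist[OF hist_support L p B] indicator_def)
  also have "\<dots> = Dn t p e n - Pn t p e n"
    unfolding Dn_def Pn_integral
    by (rule Bochner_Integration.integral_diff) (rule int_bdd[where B=B], rule bF, rule int_bdd[where B=1], simp add: indicator_def)
  finally show ?thesis .
qed

lemma D_bound:
  assumes B: "\<And>v S. \<bar>Fs t p e v S\<bar> \<le> B"
  shows "\<bar>Dn t p e n\<bar> \<le> B * Pn t p e n"
proof -
  let ?M = "hist_pmf t p (sigma_alpha t p) n"
  have bF: "\<bar>Fh t p e h\<bar> \<le> B" for h by (simp add: Fh_def B)
  have B0: "0 \<le> B" using B[of e "{}"] by simp
  have pw: "\<bar>Fh t p e h\<bar> \<le> B * indicator {h. e \<notin> traversed h} h" for h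
  proof (cases "e \<in> traversed h")
    case True then show ?thesis using B0 by (simp add: Fh_def Fs_def)
  next
    case False then show ?thesis using bF by simp
  qed
  have "\<bar>Dn t p e n\<bar> \<le> measure_pmf.expectation ?M (\<lambda>h. \<bar>Fh t p e h\<bar>)"
    unfolding Dn_def by (rule integral_abs_bound)
  also have "\<dots> \<le> measure_pmf.expectation ?M (\<lambda>h. B * indicator {h. e \<notin> traversed h} h)"
    by (rule integral_mono) (rule int_bdd[where B=B], simp add: bF, rule int_bdd[where B=B], use B0 in \<open>simp add: indicator_def\<close>, rule pw)
  also have "\<dots> = B * Pn t p e n" unfolding Pn_integral by simp
  finally show ?thesis .
qed

lemma tele:
  assumes L: "leaf_edge t e" and p: "p0_of t \<le> p" "p \<le> 1"
    and B: "\<And>v S. \<bar>Fs t p e v S\<bar> \<le> B"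
  shows "(\<Sum>k<n. Pn t p e k) = Dn t p e 0 - Dn t p e n"
proof (induction n)
  case 0 then show ?case by simp
next
  case (Suc n) then show ?case using D_Suc[OF L p B, of n] by simp
qed

lemma D0:
  assumes L: "leaf_edge t e"
  shows "Dn t p e 0 = tauT p t / 2 + LamT p t"
proof -
  have "Dn t p e 0 = Fs t p e [] {}" unfolding Dn_def Fh_def by simp
  also have "\<dots> = Kf t p e [] {}" using Inv_init[of t] unfolding Fs_def by simp
  also have "\<dots> = Gv t p []" by (subst Kf.simps) simp
  also have "\<dots> = tauT p t / 2 + LamT p t" unfolding Gv_def by simp
  finally show ?thesis .
qed

lemma Pn_nonneg: "0 \<le> Pn t p e n" unfolding Pn_def by simp
lemma Pn_le1: "Pn t p e n \<le> 1" unfolding Pn_def by simp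

lemma ET_leaf:
  assumes L: "leaf_edge t e" and p: "p0_of t \<le> p" "p \<le> 1"
  shows "ET t p (sigma_alpha t p) e = ennreal (tauT p t / 2 + LamT p t)"
proof -
  obtain B where B: "\<And>v S. \<bar>Fs t p e v S\<bar> \<le> B" using Fs_bound by blast
  have B0: "0 \<le> B" using B[of e "{}"] by simp
  note T = tele[OF L p B]
  have ps: "(\<Sum>k<n. Pn t p e k) \<le> Dn t p e 0 + B" for n
  proof -
    have "- Dn t p e n \<le> B * Pn t p e n" using D_bound[OF B, of n] by linarith
    also have "\<dots> \<le> B * 1" by (rule mult_left_mono[OF Pn_le1 B0])
    finally show ?thesis unfolding T by simp
  qed
  have sm: "summable (Pn t p e)" by (rule summableI_nonneg_bounded[OF Pn_nonneg ps])
  have P0: "Pn t p e \<longlonglongrightarrow> 0" by (rule summable_LIMSEQ_zero[OF sm])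
  have D0l: "Dn t p e \<longlonglongrightarrow> 0"
  proof (rule Lim_null_comparison)
    show "\<forall>\<^sub>F n in sequentially. norm (Dn t p e n) \<le> B * Pn t p e n" using D_bound[OF B] by simp
    show "(\<lambda>n. B * Pn t p e n) \<longlonglongrightarrow> 0" using tendsto_mult_right_zero[OF P0, of B] by simp
  qed
  have "(\<lambda>n. \<Sum>k<n. Pn t p e k) \<longlonglongrightarrow> Dn t p e 0 - 0"
    unfolding T by (intro tendsto_diff tendsto_const D0l)
  then have "Pn t p e sums (Dn t p e 0)" unfolding sums_def by simp
  then have su: "suminf (Pn t p e) = Dn t p e 0" by (simp add: sums_iff)
  have "ET t p (sigma_alpha t p) e = (\<Sum>n. ennreal (Pn t p e n))" unfolding ET_def Pn_def ..
  also have "\<dots> = ennreal (suminf (Pn t p e))" by (rule suminf_ennreal2[OF Pn_nonneg sm])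
  finally show ?thesis unfolding su D0[OF L] .
qed

lemma leaf_below:
  assumes e': "e' \<in> edges t"
  shows "\<exists>e. leaf_edge t e \<and> prefix e' e"
proof -
  define Y where "Y = {y \<in> edges t. prefix e' y}"
  have fY: "finite Y" unfolding Y_def by simp
  have "e' \<in> Y" using e' unfolding Y_def by simp
  then have ne: "length ` Y \<noteq> {}" by blast
  have "Max (length ` Y) \<in> length ` Y" using fY ne by (intro Max_in) auto
  then obtain y where y: "y \<in> Y" "length y = Max (length ` Y)" by auto
  have mx: "length z \<le> length y" if "z \<in> Y" for z using that y(2) fY by simp
  have "leaf_edge t y"
    unfolding leaf_edge_def
  proof (intro conjI)
    show "y \<in> edges t" using y(1) unfolding Y_def by simp
    have nb: "y @ [b] \<notin> verts t" for b
    proof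
      assume "y @ [b] \<in> verts t"
      then have "y @ [b] \<in> Y" using y(1) unfolding Y_def edges_def by (auto simp: prefix_def)
      then show False using mx[of "y @ [b]"] by simp
    qed
    show "y @ [False] \<notin> verts t" by (rule nb)
    show "y @ [True] \<notin> verts t" by (rule nb)
  qed
  then show ?thesis using y(1) unfolding Y_def by blast
qed

lemma ET_mono:
  assumes ne: "e' \<noteq> []" and pr: "prefix e' e"
  shows "ET t p (sigma_alpha t p) e' \<le> ET t p (sigma_alpha t p) e"
  unfolding ET_def
proof (rule suminf_le)
  fix n
  let ?M = "hist_pmf t p (sigma_alpha t p) n"
  have "measure_pmf.prob ?M {h. e' \<notin> traversed h} \<le> measure_pmf.prob ?M {h. e \<notin> traversed h}"
  proof (rule measure_pmf.finite_measure_mono_AE)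
    show "AE x in measure_pmf ?M. x \<in> {h. e' \<notin> traversed h} \<longrightarrow> x \<in> {h. e \<notin> traversed h}"
    proof (rule AE_pmfI)
      fix h assume h: "h \<in> set_pmf ?M"
      show "h \<in> {h. e' \<notin> traversed h} \<longrightarrow> h \<in> {h. e \<notin> traversed h}"
        using InvD(4)[OF hist_support[OF h], of e e'] ne pr by auto
    qed
  qed simp
  then show "ennreal (measure_pmf.prob ?M {h. e' \<notin> traversed h}) \<le> ennreal (measure_pmf.prob ?M {h. e \<notin> traversed h})"
    by (rule ennreal_leI)
qed (rule summableI)+

theorem mainTheorem8:
  fixes t :: btree
  shows "\<exists>p0::real. 0 < p0 \<and> p0 < 1 \<and>
    (\<forall>p. p0 \<le> p \<and> p \<le> 1 \<longrightarrow>
       (\<forall>e. leaf_edge t e \<longrightarrow>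
          ET t p (sigma_alpha t p) e = ennreal (tauT p t / 2 + LamT p t))
     \<and> val t p \<le> ennreal (tauT p t / 2 + LamT p t))"
proof -
  have A: "0 < p0_of t" using p0_of_props(1)[of t] by linarith
  have main: "(\<forall>e. leaf_edge t e \<longrightarrow> ET t p (sigma_alpha t p) e = ennreal (tauT p t / 2 + LamT p t))
     \<and> val t p \<le> ennreal (tauT p t / 2 + LamT p t)" if p: "p0_of t \<le> p \<and> p \<le> 1" for p
  proof
    show "\<forall>e. leaf_edge t e \<longrightarrow> ET t p (sigma_alpha t p) e = ennreal (tauT p t / 2 + LamT p t)"
      using ET_leaf p by blast
    have "val t p \<le> (SUP e\<in>edges t. ET t p (sigma_alpha t p) e)"
      unfolding val_def by (rule INF_lower) simp
    also have "\<dots> \<le> ennreal (tauT p t / 2 + LamT p t)"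
    proof (rule SUP_least)
      fix e' assume e': "e' \<in> edges t"
      obtain e where L: "leaf_edge t e" and pr: "prefix e' e" using leaf_below[OF e'] by blast
      have ne: "e' \<noteq> []" using e' unfolding edges_def by simp
      have "ET t p (sigma_alpha t p) e' \<le> ET t p (sigma_alpha t p) e" by (rule ET_mono[OF ne pr])
      also have "\<dots> = ennreal (tauT p t / 2 + LamT p t)" using ET_leaf[OF L] p by blast
      finally show "ET t p (sigma_alpha t p) e' \<le> ennreal (tauT p t / 2 + LamT p t)" .
    qed
    finally show "val t p \<le> ennreal (tauT p t / 2 + LamT p t)" .
  qed
  show ?thesis using A p0_of_props(2)[of t] main by blast
qed

end
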